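(* Let $2\le k\le n-1$ and consider the circulant digraph $C_n(\{1,k\})$ with vertex set $\{v_0,\dots,v_{n-1}\}$. If $n\ge (k-1)\lceil n/k\rceil$, then for every $0\le i\le n-1$, $$d(v_0,v_i)=\left\lfloor \frac{i}{k}\right\rfloor + re(i,k),$$ and moreover $$\mathrm{diam}(C_n(\{1,k\}))=\left\lfloor\frac{n-1}{k}\right\rfloor+\max\{re(n-1,k),\,k-2\}.$$
   Context: For $n\ge 2$ and $S\subseteq\{1,\dots,n-1\}$, the circulant digraph $C_n(S)$ has vertex set $\{v_0,\dots,v_{n-1}\}$ and arcs $v_iv_j$ for all $i,j$ with $j-i\equiv s\pmod n$ for some $s\in S$. $d(x,y)$ denotes the length of a shortest directed $xy$-path and $\mathrm{diam}$ is the maximum of $d(x,y)$ over ordered pairs of vertices. For nonnegative integers $i$ and positive $k$, $re(i,k)$ denotes the remainder of $i$ modulo $k$ (in $\{0,\dots,k-1\}$). *)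

theory Defs
  imports Complex_Main
begin

text \<open>Circulant digraph C_n(S): vertices v_0..v_{n-1} are represented by the naturals 0..n-1;
  there is an arc from v_i to v_j iff j - i is congruent mod n to some s in S.\<close>

definition circ_arc :: "nat \<Rightarrow> nat set \<Rightarrow> nat \<Rightarrow> nat \<Rightarrow> bool" where
  "circ_arc n S i j \<longleftrightarrow> i < n \<and> j < n \<and> (\<exists>s\<in>S. (int j - int i) mod int n = int s mod int n)"

fun circ_walk :: "nat \<Rightarrow> nat set \<Rightarrow> nat \<Rightarrow> nat \<Rightarrow> nat \<Rightarrow> bool" where
  "circ_walk n S x y 0 \<longleftrightarrow> x < n \<and> x = y"
| "circ_walk n S x y (Suc m) \<longleftrightarrow> (\<exists>z. circ_arc n S x z \<and> circ_walk n S z y m)"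

definition circ_dist :: "nat \<Rightarrow> nat set \<Rightarrow> nat \<Rightarrow> nat \<Rightarrow> nat" where
  "circ_dist n S x y = (LEAST m. circ_walk n S x y m)"

definition circ_diam :: "nat \<Rightarrow> nat set \<Rightarrow> nat" where
  "circ_diam n S = Max {circ_dist n S x y | x y. x < n \<and> y < n}"

end

theory Submission
  imports Defs
begin

lemma arc_iff:
  assumes "i < n" "0 < n"
  shows "circ_arc n S i j \<longleftrightarrow> j < n \<and> (\<exists>s\<in>S. j = (i + s) mod n)"
proof -
  have key: "(int j - int i) mod int n = int s mod int n \<longleftrightarrow> j = (i + s) mod n" if "j < n" for s
  proof -
    have "(int j - int i) mod int n = int s mod int n \<longleftrightarrow> int n dvd (int j - int i - int s)"
      by (simp add: mod_eq_dvd_iff)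
    also have "\<dots> \<longleftrightarrow> int j mod int n = int (i + s) mod int n"
      by (simp add: mod_eq_dvd_iff algebra_simps)
    also have "\<dots> \<longleftrightarrow> j = (i + s) mod n"
      using that by (metis mod_less of_nat_eq_iff zmod_int)
    finally show ?thesis .
  qed
  show ?thesis unfolding circ_arc_def using assms key by auto
qed

lemma walk_char:
  assumes "0 < n"
  shows "circ_walk n {1, k} x y m \<longleftrightarrow> x < n \<and> (\<exists>a b. a + b = m \<and> y = (x + a + b * k) mod n)"
proof (induction m arbitrary: x)
  case 0
  then show ?case by auto
next
  case (Suc m)
  show ?case
  proof
    assume "circ_walk n {1, k} x y (Suc m)"
    then obtain z where az: "circ_arc n {1,k} x z" and wz: "circ_walk n {1, k} z y m" by auto
    have xn: "x < n" using az unfolding circ_arc_def by auto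
    from Suc wz obtain a b where ab: "a + b = m" "y = (z + a + b * k) mod n" by auto
    from az xn assms have "z = (x + 1) mod n \<or> z = (x + k) mod n" by (auto simp: arc_iff)
    then show "x < n \<and> (\<exists>a b. a + b = Suc m \<and> y = (x + a + b * k) mod n)"
    proof
      assume "z = (x + 1) mod n"
      then have "y = ((x + 1) + (a + b * k)) mod n" using ab
        by (metis mod_add_left_eq add.assoc)
      then have "y = (x + Suc a + b * k) mod n" by (simp add: algebra_simps)
      then show ?thesis using xn ab by (intro conjI exI[of _ "Suc a"] exI[of _ b]) auto
    next
      assume "z = (x + k) mod n"
      then have "y = ((x + k) + (a + b * k)) mod n" using ab
        by (metis mod_add_left_eq add.assoc)
      then have "y = (x + a + Suc b * k) mod n" by (simp add: algebra_simps)
      then show ?thesis using xn ab by (intro conjI exI[of _ "a"] exI[of _ "Suc b"]) auto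
    qed
  next
    assume h: "x < n \<and> (\<exists>a b. a + b = Suc m \<and> y = (x + a + b * k) mod n)"
    then obtain a b where ab: "a + b = Suc m" "y = (x + a + b * k) mod n" and xn: "x < n" by auto
    show "circ_walk n {1, k} x y (Suc m)"
    proof (cases a)
      case 0
      then obtain b' where b': "b = Suc b'" using ab by (cases b) auto
      let ?z = "(x + k) mod n"
      have "circ_arc n {1,k} x ?z" using xn assms by (auto simp: arc_iff)
      moreover have "circ_walk n {1, k} ?z y m"
      proof -
        have "y = ((x + k) + (a + b' * k)) mod n"
          using ab(2) 0 b' by (simp add: algebra_simps)
        also have "\<dots> = ((x + k) mod n + (a + b' * k)) mod n"
          by (rule mod_add_left_eq[symmetric])
        finally have "y = ((x + k) mod n + (a + b' * k)) mod n" .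
        then show ?thesis unfolding Suc.IH[of ?z] using ab 0 b' assms
          by (intro conjI exI[of _ 0] exI[of _ b']) auto
      qed
      ultimately show ?thesis by auto
    next
      case (Suc a')
      let ?z = "(x + 1) mod n"
      have "circ_arc n {1,k} x ?z" using xn assms by (auto simp: arc_iff)
      moreover have "circ_walk n {1, k} ?z y m"
      proof -
        have "y = ((x + 1) + (a' + b * k)) mod n"
          using ab(2) Suc by (simp add: algebra_simps)
        also have "\<dots> = ((x + 1) mod n + (a' + b * k)) mod n"
          by (rule mod_add_left_eq[symmetric])
        finally have "y = ((x + 1) mod n + (a' + b * k)) mod n" .
        then show ?thesis unfolding Suc.IH[of ?z] using ab Suc assms
          by (intro conjI exI[of _ a'] exI[of _ b]) (auto simp: add.assoc)
      qed
      ultimately show ?thesis by auto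
    qed
  qed
qed

lemma dist0:
  assumes k2: "2 \<le> k" and n0: "0 < n" and ck: "n \<le> c * k" and kc: "(k - 1) * c \<le> n"
    and i: "i < n"
  shows "circ_dist n {1, k} 0 i = i div k + i mod k"
  unfolding circ_dist_def
proof (rule Least_equality)
  show "circ_walk n {1, k} 0 i (i div k + i mod k)"
    unfolding walk_char[OF n0] using n0 i
    by (intro conjI exI[of _ "i mod k"] exI[of _ "i div k"]) auto
next
  fix m assume "circ_walk n {1, k} 0 i m"
  then obtain a b where ab: "a + b = m" "i = (a + b * k) mod n"
    unfolding walk_char[OF n0] by auto
  define M where "M = a + b * k"
  define t where "t = M div n"
  define B where "B = M div k"
  define Q where "Q = i div k"
  define R where "R = i mod k"
  have Mi: "M = i + t * n" using ab(2) unfolding M_def t_def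
    by (metis add.commute div_mult_mod_eq)
  have iQ: "i = Q * k + R" unfolding Q_def R_def by simp
  have bB: "b \<le> B" unfolding B_def M_def using k2
    by (metis div_le_mono le_add2 nonzero_mult_div_cancel_right not_numeral_le_zero zero_less_iff_neq_zero)
  have MB: "B * k \<le> M" unfolding B_def by (simp add: div_times_less_eq_dividend)
  have "B * k \<le> Q * k + R + t * (c * k)" using MB Mi iQ ck
    by (metis add_le_mono1 add_left_mono mult.assoc mult_le_mono2 order_trans)
  also have "R < k" unfolding R_def using k2 by simp
  hence "Q * k + R + t * (c * k) < (Q + 1 + t * c) * k" by (simp add: algebra_simps)
  finally have "B * k < (Q + 1 + t * c) * k" .
  hence BQ: "B \<le> Q + t * c" by (metis Suc_eq_plus1 add.commute add_Suc less_Suc_eq_le mult_less_cancel2)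
  have e1: "b * (k - 1) \<le> B * (k - 1)" using bB by simp
  have e2: "B * (k - 1) \<le> (Q + t * c) * (k - 1)" using BQ by simp
  have e3: "t * (c * (k - 1)) \<le> t * n" using kc by (simp add: mult.commute)
  have e4: "(Q + t * c) * (k - 1) = Q * (k - 1) + t * (c * (k - 1))" by (simp add: algebra_simps)
  have e5: "Q * k = Q * (k - 1) + Q" using k2
    by (metis Suc_diff_1 add.commute less_le_trans mult_Suc_right mult.commute pos2)
  have e6: "b * k = b * (k - 1) + b" using k2
    by (metis Suc_diff_1 add.commute less_le_trans mult_Suc_right mult.commute pos2)
  have "M = a + b * k" by (simp add: M_def)
  show "i div k + i mod k \<le> m"
    using e1 e2 e3 e4 e5 e6 Mi iQ ab(1) \<open>M = a + b * k\<close> unfolding Q_def[symmetric] R_def[symmetric]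
    by linarith
qed

lemma shift_eq:
  fixes x y n M :: nat
  assumes "x < n" "y < n"
  shows "y = (x + M) mod n \<longleftrightarrow> (y + n - x) mod n = M mod n"
proof
  assume h: "y = (x + M) mod n"
  have "y + n - x = y + (n - x)" using assms by linarith
  hence "(y + n - x) mod n = (y + (n - x)) mod n" by simp
  also have "\<dots> = ((x + M) + (n - x)) mod n" using h by (simp add: mod_add_left_eq)
  also have "(x + M) + (n - x) = M + n" using assms by simp
  finally show "(y + n - x) mod n = M mod n" by simp
next
  assume h: "(y + n - x) mod n = M mod n"
  have "(x + M) mod n = (x + (y + n - x)) mod n" using h by (metis mod_add_right_eq)
  also have "x + (y + n - x) = y + n" using assms by simp
  finally show "y = (x + M) mod n" using assms by simp
qed

lemma dist_shift:
  assumes "0 < n" "x < n" "y < n"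
  shows "circ_dist n {1, k} x y = circ_dist n {1, k} 0 ((y + n - x) mod n)"
proof -
  have "circ_walk n {1, k} x y m = circ_walk n {1, k} 0 ((y + n - x) mod n) m" for m
    unfolding walk_char[OF assms(1)] using assms shift_eq[OF assms(2,3)]
    by (auto simp: add.assoc)
  then have "circ_walk n {1, k} x y = circ_walk n {1, k} 0 ((y + n - x) mod n)" by (rule ext)
  then show ?thesis unfolding circ_dist_def by simp
qed

lemma f_bound:
  fixes j n k :: nat
  assumes k2: "2 \<le> k" and j: "j < n"
  shows "j div k + j mod k \<le> (n - 1) div k + max ((n - 1) mod k) (k - 2)"
proof -
  let ?Q = "(n - 1) div k"
  have jle: "j \<le> n - 1" using j by simp
  have dq: "j div k \<le> ?Q" using jle by (rule div_le_mono)
  show ?thesis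
  proof (cases "j div k = ?Q")
    case True
    have "j = ?Q * k + j mod k" using True by (metis div_mult_mod_eq)
    moreover have "n - 1 = ?Q * k + (n - 1) mod k" by simp
    ultimately have "j mod k \<le> (n - 1) mod k" using jle by linarith
    then show ?thesis using True by simp
  next
    case False
    hence "j div k + 1 \<le> ?Q" using dq by simp
    moreover have "j mod k \<le> k - 1" using k2
      by (metis Suc_pred' less_Suc_eq_le mod_less_divisor not_numeral_le_zero zero_less_iff_neq_zero)
    ultimately show ?thesis using k2 by linarith
  qed
qed

theorem lemma8:
  fixes n k :: nat
  assumes "2 \<le> k" and "k \<le> n - 1"
    and "real n \<ge> (real k - 1) * real_of_int \<lceil>real n / real k\<rceil>"
  shows "(\<forall>i<n. circ_dist n {1, k} 0 i = i div k + i mod k)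
       \<and> circ_diam n {1, k} = (n - 1) div k + max ((n - 1) mod k) (k - 2)"
proof -
  have k2: "2 \<le> k" using assms by simp
  have n0: "0 < n" using assms by simp
  define c where "c = nat \<lceil>real n / real k\<rceil>"
  have cge: "real n / real k \<le> real c" unfolding c_def by linarith
  have ck: "n \<le> c * k"
  proof -
    have kp: "0 < real k" using k2 by simp
    have "real n \<le> real c * real k" using cge by (simp only: pos_divide_le_eq[OF kp])
    hence "real n \<le> real (c * k)" by simp
    then show ?thesis by (simp only: of_nat_le_iff)
  qed
  have "0 \<le> real n / real k" by simp
  hence "0 \<le> \<lceil>real n / real k\<rceil>" by linarith
  hence "real c = real_of_int \<lceil>real n / real k\<rceil>" unfolding c_def by simp
  hence "(real k - 1) * real c \<le> real n" using assms(3) by simp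
  moreover have "real (k - 1) = real k - 1" using k2 by simp
  ultimately have "real ((k - 1) * c) \<le> real n" by simp
  hence kc: "(k - 1) * c \<le> n" by (simp only: of_nat_le_iff)
  have D: "\<forall>i<n. circ_dist n {1, k} 0 i = i div k + i mod k"
    using dist0[OF k2 n0 ck kc] by blast
  let ?D = "(n - 1) div k + max ((n - 1) mod k) (k - 2)"
  let ?A = "{circ_dist n {1, k} x y | x y. x < n \<and> y < n}"
  have ub: "\<forall>d\<in>?A. d \<le> ?D"
  proof
    fix d assume "d \<in> ?A"
    then obtain x y where xy: "x < n" "y < n" "d = circ_dist n {1, k} x y" by auto
    let ?j = "(y + n - x) mod n"
    have "?j < n" using n0 by simp
    then have "circ_dist n {1, k} 0 ?j = ?j div k + ?j mod k" using D by blast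
    moreover have "?j div k + ?j mod k \<le> ?D" using f_bound[OF k2 \<open>?j < n\<close>] .
    ultimately show "d \<le> ?D" using xy(3) dist_shift[OF n0 xy(1,2)] by simp
  qed
  have fin: "finite ?A"
  proof -
    have "?A \<subseteq> (\<lambda>(x, y). circ_dist n {1, k} x y) ` ({..<n} \<times> {..<n})" by auto
    then show ?thesis by (rule finite_subset) simp
  qed
  have att: "?D \<in> ?A"
  proof (cases "(k - 2) \<le> (n - 1) mod k")
    case True
    have "n - 1 < n" using n0 by simp
    hence "circ_dist n {1, k} 0 (n - 1) = (n - 1) div k + (n - 1) mod k" using D by blast
    hence "circ_dist n {1, k} 0 (n - 1) = ?D" using True by simp
    then show ?thesis using n0 \<open>n - 1 < n\<close>
      by (intro CollectI exI[of _ 0] exI[of _ "n - 1"]) simp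
  next
    case False
    define Q where "Q = (n - 1) div k"
    have "k div k \<le> (n - 1) div k" using assms(2) by (rule div_le_mono)
    hence Q1: "1 \<le> Q" unfolding Q_def using k2 by simp
    define j where "j = (Q - 1) * k + (k - 1)"
    have jdm: "j div k = Q - 1" "j mod k = k - 1"
    proof -
      obtain r where r: "k = Suc r" using k2 by (cases k) auto
      have "j = r + (Q - 1) * k" unfolding j_def using r by simp
      moreover have "r < k" using r by simp
      have rk: "r = k - 1" using r by simp
      have kp: "k \<noteq> 0" using k2 by simp
      have "(r + (Q - 1) * k) div k = Q - 1" using \<open>r < k\<close> kp by simp
      moreover have "(r + (Q - 1) * k) mod k = r" using \<open>r < k\<close> kp by simp
      ultimately show "j div k = Q - 1" "j mod k = k - 1" using \<open>j = r + (Q - 1) * k\<close> rk by simp_all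
    qed
    have "Q * k \<le> n - 1" unfolding Q_def by (simp add: div_times_less_eq_dividend)
    moreover have "j + 1 = Q * k"
    proof -
      obtain Q' where "Q = Suc Q'" using Q1 by (cases Q) auto
      then show ?thesis unfolding j_def using k2 by simp
    qed
    ultimately have jn: "j < n" by linarith
    have "circ_dist n {1, k} 0 j = j div k + j mod k" using D jn by blast
    hence "circ_dist n {1, k} 0 j = (Q - 1) + (k - 1)" using jdm by simp
    moreover have "(Q - 1) + (k - 1) = ?D" using False Q1 k2 unfolding Q_def[symmetric] by simp
    ultimately have "circ_dist n {1, k} 0 j = ?D" by simp
    then show ?thesis using n0 jn
      by (intro CollectI exI[of _ 0] exI[of _ j]) simp
  qed
  have "circ_diam n {1, k} = ?D" unfolding circ_diam_def
    using fin att ub by (intro Max_eqI) auto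
  with D show ?thesis by simp
qed

end
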